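(* Let $K\ge2$, $0<q<p$ with $p+(K-1)q=1$. Each of the maps $\phi\mapsto\mathrm{Inv}(\phi)$, $\phi\mapsto\mathrm{InvP}(\phi)$, $\phi\mapsto\mathrm{InvN}(\phi)$, $\phi\mapsto\mathrm{MLE}^*(\phi)$, defined on $\Delta$ with values in $\mathbb{R}^K$, is continuous.
   Context: $\Delta=\{\theta\in\mathbb{R}^K:\theta_i\ge0,\sum_i\theta_i=1\}$. $\mathrm{Inv}(\phi)_i=\frac{\phi_i-q}{p-q}$; $\mathrm{InvN}(\phi)_i=\frac{\max(0,\mathrm{Inv}(\phi)_i)}{\sum_j\max(0,\mathrm{Inv}(\phi)_j)}$; $\mathrm{InvP}(\phi)=\arg\min_{\theta\in\Delta}\|\theta-\mathrm{Inv}(\phi)\|_2$. $\mathrm{MLE}^*(\phi)$: for real $\tau$ let $m(\tau)=|\{i:\phi_i<\tau\}|$, $c_\tau=\frac{1-m(\tau)q}{\sum_{i:\phi_i\ge\tau}\phi_i}$; let $\tau^*$ be the smallest $\tau\in\{\phi_1,\dots,\phi_K\}$ with $c_\tau\phi_i\ge q$ for all $i$ with $\phi_i\ge\tau$; $\mathrm{MLE}^*(\phi)_i=0$ if $\phi_i<\tau^*$ and $\frac{c_{\tau^*}\phi_i-q}{p-q}$ otherwise. *)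

theory Defs
  imports "HOL-Analysis.Analysis"
begin

text \<open>Vectors in R^K are modelled as real^'n with K = CARD('n).\<close>

definition prob_simplex :: "(real^'n) set" where
  "prob_simplex = {\<theta>. (\<forall>i. \<theta> $ i \<ge> 0) \<and> (\<Sum>i\<in>UNIV. \<theta> $ i) = 1}"

definition Inv :: "real \<Rightarrow> real \<Rightarrow> real^'n \<Rightarrow> real^'n" where
  "Inv p q \<phi> = (\<chi> i. (\<phi> $ i - q) / (p - q))"

definition InvN :: "real \<Rightarrow> real \<Rightarrow> real^'n \<Rightarrow> real^'n" where
  "InvN p q \<phi> = (\<chi> i. max 0 (Inv p q \<phi> $ i) / (\<Sum>j\<in>UNIV. max 0 (Inv p q \<phi> $ j)))"

definition InvP :: "real \<Rightarrow> real \<Rightarrow> real^'n \<Rightarrow> real^'n" where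
  "InvP p q \<phi> = closest_point prob_simplex (Inv p q \<phi>)"

definition mcount :: "real^'n \<Rightarrow> real \<Rightarrow> nat" where
  "mcount \<phi> \<tau> = card {i. \<phi> $ i < \<tau>}"

definition cconst :: "real \<Rightarrow> real^'n \<Rightarrow> real \<Rightarrow> real" where
  "cconst q \<phi> \<tau> = (1 - real (mcount \<phi> \<tau>) * q) / (\<Sum>i\<in>{i. \<phi> $ i \<ge> \<tau>}. \<phi> $ i)"

definition tau_star :: "real \<Rightarrow> real^'n \<Rightarrow> real" where
  "tau_star q \<phi> = Min {\<tau>. \<tau> \<in> range (\<lambda>i. \<phi> $ i) \<and>
      (\<forall>i. \<phi> $ i \<ge> \<tau> \<longrightarrow> cconst q \<phi> \<tau> * \<phi> $ i \<ge> q)}"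

definition MLEstar :: "real \<Rightarrow> real \<Rightarrow> real^'n \<Rightarrow> real^'n" where
  "MLEstar p q \<phi> = (\<chi> i. if \<phi> $ i < tau_star q \<phi> then 0
      else (cconst q \<phi> (tau_star q \<phi>) * \<phi> $ i - q) / (p - q))"

end

theory Submission
  imports Defs
begin


lemma simplex_closed: "closed (prob_simplex :: (real^'n) set)"
proof -
  have "prob_simplex = (\<Inter>i. {x::real^'n. x$i \<ge> 0}) \<inter> {x. (\<Sum>i\<in>UNIV. x$i) = 1}"
    unfolding prob_simplex_def by auto
  moreover have "closed {x::real^'n. (\<Sum>i\<in>UNIV. x$i) = 1}"
    by (intro closed_Collect_eq continuous_intros)
  moreover have "closed {x::real^'n. x$i \<ge> 0}" for i
    by (intro closed_Collect_le continuous_intros)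
  ultimately show ?thesis by (metis closed_INT closed_Int)
qed

lemma simplex_convex: "convex (prob_simplex :: (real^'n) set)"
  unfolding convex_def prob_simplex_def
  by (auto simp: sum.distrib sum_distrib_left[symmetric])

lemma simplex_ne: "(prob_simplex :: (real^'n) set) \<noteq> {}"
proof -
  have "(\<chi> i. 1 / real CARD('n)) \<in> (prob_simplex :: (real^'n) set)"
    unfolding prob_simplex_def by auto
  then show ?thesis by auto
qed

lemma Inv_cont: "continuous_on S (Inv p q :: real^'n \<Rightarrow> real^'n)"
proof -
  have "Inv p q = (\<lambda>x::real^'n. \<chi> i. (x $ i - q) * inverse (p - q))"
    by (auto simp: Inv_def divide_inverse fun_eq_iff)
  then show ?thesis by (simp add: continuous_intros)
qed

lemma InvP_cont: "continuous_on S (InvP p q :: real^'n \<Rightarrow> real^'n)"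
proof -
  have "InvP p q = closest_point prob_simplex \<circ> (Inv p q :: real^'n \<Rightarrow> real^'n)"
    by (auto simp: InvP_def)
  then show ?thesis
    by (metis continuous_on_compose Inv_cont continuous_on_closest_point simplex_convex simplex_closed simplex_ne)
qed

lemma Inv_sum:
  assumes "\<phi> \<in> prob_simplex" "q < p" "p + (real CARD('n) - 1) * q = 1"
  shows "(\<Sum>j\<in>UNIV. Inv p q (\<phi>::real^'n) $ j) = 1"
proof -
  have "(\<Sum>j\<in>UNIV. Inv p q \<phi> $ j) = (\<Sum>j\<in>UNIV. \<phi> $ j - q) / (p - q)"
    by (simp add: Inv_def sum_divide_distrib)
  also have "\<dots> = (1 - real CARD('n) * q) / (p - q)"
    using assms(1) by (simp add: sum_subtractf prob_simplex_def)
  also have "\<dots> = 1" using assms(2,3) by (simp add: algebra_simps)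
  finally show ?thesis .
qed

lemma InvN_cont:
  assumes "q < p" "p + (real CARD('n) - 1) * q = 1"
  shows "continuous_on prob_simplex (InvN p q :: real^'n \<Rightarrow> real^'n)"
proof -
  have pos: "(\<Sum>j\<in>UNIV. max 0 (Inv p q \<phi> $ j)) \<noteq> 0" if "\<phi> \<in> prob_simplex" for \<phi> :: "real^'n"
  proof -
    have "1 = (\<Sum>j\<in>UNIV. Inv p q \<phi> $ j)" using Inv_sum[OF that assms] by simp
    also have "\<dots> \<le> (\<Sum>j\<in>UNIV. max 0 (Inv p q \<phi> $ j))" by (intro sum_mono) auto
    finally show ?thesis by auto
  qed
  show ?thesis
    unfolding InvN_def
    apply (intro continuous_intros Inv_cont)
    using pos by auto
qed


lemma card_split:
  fixes \<phi> :: "real^'n"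
  shows "real (mcount \<phi> t) + real (card {i. \<phi> $ i \<ge> t}) = real CARD('n)"
proof -
  have "{i. \<phi> $ i < t} \<union> {i. \<phi> $ i \<ge> t} = UNIV" by auto
  moreover have "{i. \<phi> $ i < t} \<inter> {i. \<phi> $ i \<ge> t} = {}" by auto
  ultimately have "card {i. \<phi> $ i < t} + card {i. \<phi> $ i \<ge> t} = CARD('n)"
    by (metis card_Un_disjoint finite)
  then show ?thesis unfolding mcount_def by (metis of_nat_add)
qed

lemma key:
  fixes \<phi> :: "real^'n"
  assumes sim: "\<phi> \<in> prob_simplex" and q0: "0 < q" and qp: "q < p"
    and hK: "p + (real CARD('n) - 1) * q = 1"
  shows "0 < cconst q \<phi> (tau_star q \<phi>)"
    "MLEstar p q \<phi> = (\<chi> i. max 0 (cconst q \<phi> (tau_star q \<phi>) * \<phi> $ i - q) / (p - q))"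
    "(\<Sum>i\<in>UNIV. max 0 (cconst q \<phi> (tau_star q \<phi>) * \<phi> $ i - q)) = p - q"
proof -
  define K where "K = real CARD('n)"
  have nn: "\<phi> $ i \<ge> 0" for i using sim by (auto simp: prob_simplex_def)
  have s1: "(\<Sum>i\<in>UNIV. \<phi> $ i) = 1" using sim by (auto simp: prob_simplex_def)
  define M where "M = Max (range (\<lambda>i. \<phi> $ i))"
  have "M \<in> range (\<lambda>i. \<phi> $ i)" unfolding M_def by (intro Max_in) auto
  then obtain iM where iM: "\<phi> $ iM = M" by auto
  have leM: "\<phi> $ i \<le> M" for i unfolding M_def by (simp add: Max_ge)
  have M0: "M > 0"
  proof (rule ccontr)
    assume "\<not> M > 0"
    then have "\<phi> $ i = 0" for i using leM[of i] nn[of i] by auto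
    then show False using s1 by simp
  qed
  have Kq: "K * q < 1" using hK qp unfolding K_def by (simp add: algebra_simps)
  define S where "S t = (\<Sum>i\<in>{i. \<phi> $ i \<ge> t}. \<phi> $ i)" for t
  have cc: "cconst q \<phi> t = (1 - real (mcount \<phi> t) * q) / S t" for t
    unfolding cconst_def S_def by simp
  have Spos: "S t \<ge> M" if "t \<le> M" for t
  proof -
    have "iM \<in> {i. \<phi> $ i \<ge> t}" using that iM by auto
    then have "\<phi> $ iM \<le> S t" unfolding S_def
      by (intro member_le_sum) (auto simp: nn)
    then show ?thesis using iM by simp
  qed
  have mle: "real (mcount \<phi> t) \<le> K - 1" if "t \<le> M" for t
  proof -
    have "{i. \<phi> $ i < t} \<subseteq> UNIV - {iM}" using that iM by auto
    then have "card {i. \<phi> $ i < t} \<le> card (UNIV - {iM})" by (intro card_mono) auto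
    also have "\<dots> = CARD('n) - 1" by (simp add: card_Diff_singleton)
    finally have "card {i. \<phi> $ i < t} \<le> CARD('n) - 1" .
    moreover have "CARD('n) \<ge> 1" by (simp add: Suc_leI)
    ultimately show ?thesis unfolding mcount_def K_def
      by (metis (no_types, lifting) of_nat_1 of_nat_diff of_nat_le_iff)
  qed
  have numpos: "1 - real (mcount \<phi> t) * q > 0" if "t \<le> M" for t
  proof -
    have "real (mcount \<phi> t) * q \<le> (K - 1) * q" using mle[OF that] q0 by (simp add: mult_right_mono)
    also have "(K - 1) * q < 1" using hK qp q0 unfolding K_def by (simp add: algebra_simps)
    finally show ?thesis by simp
  qed
  have cpos: "cconst q \<phi> t > 0" if "t \<le> M" for t
    using numpos[OF that] Spos[OF that] M0 cc by simp
  define T where "T = {\<tau>. \<tau> \<in> range (\<lambda>i. \<phi> $ i) \<and>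
      (\<forall>i. \<phi> $ i \<ge> \<tau> \<longrightarrow> cconst q \<phi> \<tau> * \<phi> $ i \<ge> q)}"
  have finT: "finite T" unfolding T_def by auto
  have MT: "M \<in> T"
  proof -
    define k where "k = real (card {i. \<phi> $ i \<ge> M})"
    have k1: "k \<ge> 1"
    proof -
      have "iM \<in> {i. \<phi> $ i \<ge> M}" using iM by auto
      then have "card {i. \<phi> $ i \<ge> M} \<noteq> 0" by auto
      then show ?thesis unfolding k_def by linarith
    qed
    have SM: "S M = k * M"
    proof -
      have "S M = (\<Sum>i\<in>{i. \<phi> $ i \<ge> M}. M)" unfolding S_def
        by (intro sum.cong) (auto intro: antisym leM)
      then show ?thesis by (simp add: k_def)
    qed
    have mM: "real (mcount \<phi> M) = K - k" using card_split[of \<phi> M] unfolding k_def K_def by linarith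
    have "cconst q \<phi> M * M = (1 - (K - k) * q) / k" using M0 k1 by (simp add: cc SM mM)
    also have "\<dots> \<ge> q" using k1 Kq by (simp add: field_simps)
    finally have "cconst q \<phi> M * M \<ge> q" .
    then have "\<forall>i. M \<le> \<phi> $ i \<longrightarrow> q \<le> cconst q \<phi> M * \<phi> $ i"
      using leM by (metis order_antisym)
    moreover have "M \<in> range (\<lambda>i. \<phi> $ i)" using iM by (metis rangeI)
    ultimately show ?thesis unfolding T_def by blast
  qed
  have ts: "tau_star q \<phi> = Min T" unfolding tau_star_def T_def by simp
  have tT: "tau_star q \<phi> \<in> T" using ts finT MT by (metis Min_in empty_iff)
  have tmin: "tau_star q \<phi> \<le> t" if "t \<in> T" for t using ts finT that by simp
  define ts' where "ts' = tau_star q \<phi>"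
  define c where "c = cconst q \<phi> ts'"
  have tsM: "ts' \<le> M" using tmin[OF MT] ts'_def by simp
  have c0: "c > 0" unfolding c_def using cpos[OF tsM] .
  then show "0 < cconst q \<phi> (tau_star q \<phi>)" unfolding c_def ts'_def .
  have ha: "c * \<phi> $ i \<ge> q" if "\<phi> $ i \<ge> ts'" for i
    using tT that unfolding T_def c_def ts'_def by auto
  have hb: "c * \<phi> $ j < q" if j: "\<phi> $ j < ts'" for j
  proof -
    define L where "L = {x \<in> range (\<lambda>i. \<phi> $ i). x < ts'}"
    have finL: "finite L" unfolding L_def by auto
    have jL: "\<phi> $ j \<in> L" unfolding L_def using j by auto
    define t' where "t' = Max L"
    have t'L: "t' \<in> L" unfolding t'_def using finL jL by (metis Max_in empty_iff)
    have jt': "\<phi> $ j \<le> t'" unfolding t'_def using finL jL by simp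
    have t'lt: "t' < ts'" and t'r: "t' \<in> range (\<lambda>i. \<phi> $ i)" using t'L unfolding L_def by auto
    have t'M: "t' \<le> M" using t'lt tsM by simp
    have "t' \<notin> T" using tmin t'lt ts'_def by force
    then obtain i where i1: "\<phi> $ i \<ge> t'" and i2: "cconst q \<phi> t' * \<phi> $ i < q"
      using t'r unfolding T_def by auto
    have c'0: "cconst q \<phi> t' > 0" using cpos[OF t'M] .
    have c't: "cconst q \<phi> t' * t' < q"
      using i2 mult_left_mono[OF i1 less_imp_le[OF c'0]] by simp
    define k where "k = card {i. \<phi> $ i = t'}"
    have setA: "{i. \<phi> $ i \<ge> t'} = {i. \<phi> $ i \<ge> ts'} \<union> {i. \<phi> $ i = t'}"
    proof (intro set_eqI iffI)
      fix x assume "x \<in> {i. \<phi> $ i \<ge> t'}"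
      then have "\<phi> $ x \<ge> t'" by simp
      moreover have "\<phi> $ x \<le> t'" if "\<phi> $ x < ts'"
        using that finL unfolding t'_def L_def by (auto intro!: Max_ge)
      ultimately show "x \<in> {i. \<phi> $ i \<ge> ts'} \<union> {i. \<phi> $ i = t'}" by force
    qed (use t'lt in auto)
    have setB: "{i. \<phi> $ i < ts'} = {i. \<phi> $ i < t'} \<union> {i. \<phi> $ i = t'}"
    proof (intro set_eqI iffI)
      fix x assume "x \<in> {i. \<phi> $ i < ts'}"
      then have "\<phi> $ x \<le> t'"
        using finL unfolding t'_def L_def by (auto intro!: Max_ge)
      then show "x \<in> {i. \<phi> $ i < t'} \<union> {i. \<phi> $ i = t'}" by force
    qed (use t'lt in auto)
    have SS: "S t' = S ts' + real k * t'"
    proof -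
      have "S t' = S ts' + (\<Sum>i\<in>{i. \<phi> $ i = t'}. \<phi> $ i)"
        unfolding S_def setA using t'lt by (subst sum.union_disjoint) auto
      also have "(\<Sum>i\<in>{i. \<phi> $ i = t'}. \<phi> $ i) = (\<Sum>i\<in>{i. \<phi> $ i = t'}. t')"
        by (intro sum.cong) auto
      finally show ?thesis by (simp add: k_def)
    qed
    have mm: "real (mcount \<phi> ts') = real (mcount \<phi> t') + real k"
    proof -
      have "mcount \<phi> ts' = card {i. \<phi> $ i < t'} + k"
        unfolding mcount_def setB k_def by (subst card_Un_disjoint) auto
      then show ?thesis by (simp add: mcount_def)
    qed
    have Sp: "S t' > 0" "S ts' > 0" using Spos[OF t'M] Spos[OF tsM] M0 by auto
    have "(1 - real (mcount \<phi> t') * q) * t' < q * S t'"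
      using c't Sp by (simp add: cc field_simps)
    then have "(1 - real (mcount \<phi> ts') * q) * t' < q * S ts'"
      unfolding SS mm by (simp add: algebra_simps)
    then have ct: "c * t' < q" using Sp unfolding c_def by (simp add: cc field_simps)
    have "c * \<phi> $ j \<le> c * t'" using jt' c0 by (simp add: mult_left_mono)
    then show ?thesis using ct by simp
  qed
  have mx: "max 0 (c * \<phi> $ i - q) = (if \<phi> $ i < ts' then 0 else c * \<phi> $ i - q)" for i
  proof (cases "\<phi> $ i < ts'")
    case True then show ?thesis using hb[OF True] by simp
  next
    case False then show ?thesis using ha[of i] by simp
  qed
  show "MLEstar p q \<phi> = (\<chi> i. max 0 (cconst q \<phi> (tau_star q \<phi>) * \<phi> $ i - q) / (p - q))"
    using mx unfolding MLEstar_def c_def ts'_def by (simp add: vec_eq_iff)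
  have "(\<Sum>i\<in>UNIV. max 0 (c * \<phi> $ i - q)) = (\<Sum>i\<in>{i. \<phi> $ i \<ge> ts'}. c * \<phi> $ i - q)"
    unfolding mx by (subst sum.If_cases) (auto intro!: sum.cong)
  also have "\<dots> = c * S ts' - real (card {i. \<phi> $ i \<ge> ts'}) * q"
    unfolding S_def by (simp add: sum_subtractf sum_distrib_left)
  also have "\<dots> = (1 - real (mcount \<phi> ts') * q) - real (card {i. \<phi> $ i \<ge> ts'}) * q"
    using Spos[OF tsM] M0 unfolding c_def by (simp add: cc)
  also have "\<dots> = 1 - K * q"
  proof -
    have e: "real (mcount \<phi> ts') + real (card {i. \<phi> $ i \<ge> ts'}) = K"
      using card_split[of \<phi> ts'] unfolding K_def .
    have "real (mcount \<phi> ts') * q + real (card {i. \<phi> $ i \<ge> ts'}) * q = K * q"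
      by (subst e[symmetric]) (simp add: distrib_right)
    then show ?thesis by linarith
  qed
  also have "\<dots> = p - q" using hK unfolding K_def by (simp add: algebra_simps)
  finally show "(\<Sum>i\<in>UNIV. max 0 (cconst q \<phi> (tau_star q \<phi>) * \<phi> $ i - q)) = p - q"
    unfolding c_def ts'_def .
qed


definition Gf :: "real \<Rightarrow> real^'n \<Rightarrow> real \<Rightarrow> real" where
  "Gf q \<phi> a = (\<Sum>i\<in>UNIV. max 0 (a * \<phi> $ i - q))"

lemma Gf_mono:
  assumes "\<phi> \<in> prob_simplex" "a \<le> b"
  shows "Gf q \<phi> a \<le> Gf q \<phi> b"
  unfolding Gf_def
proof (intro sum_mono)
  fix i
  have "\<phi> $ i \<ge> 0" using assms(1) by (auto simp: prob_simplex_def)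
  then have "a * \<phi> $ i \<le> b * \<phi> $ i" using assms(2) by (simp add: mult_right_mono)
  then show "max 0 (a * \<phi> $ i - q) \<le> max 0 (b * \<phi> $ i - q)" by simp
qed

lemma Gf_strict:
  assumes "\<phi> \<in> prob_simplex" "Gf q \<phi> c = r" "r > 0" "q > 0"
  shows "a < c \<Longrightarrow> Gf q \<phi> a < r" and "c < a \<Longrightarrow> Gf q \<phi> a > r"
proof -
  have nn: "\<phi> $ i \<ge> 0" for i using assms(1) by (auto simp: prob_simplex_def)
  obtain i where i: "c * \<phi> $ i - q > 0"
  proof (rule ccontr)
    assume "\<not> thesis"
    then have h: "\<not> (c * \<phi> $ i - q > 0)" for i using that[of i] by blast
    have "max 0 (c * \<phi> $ i - q) = 0" for i using h[of i] by (simp add: max_def)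
    then have "Gf q \<phi> c = 0" unfolding Gf_def by simp
    then show False using assms by simp
  qed
  have pi: "\<phi> $ i > 0"
  proof (rule ccontr)
    assume "\<not> \<phi> $ i > 0"
    then have "\<phi> $ i = 0" using nn[of i] by simp
    then show False using i assms by auto
  qed
  {
    assume ac: "a < c"
    have "Gf q \<phi> a < Gf q \<phi> c" unfolding Gf_def
    proof (rule sum_strict_mono_ex1)
      show "\<forall>x\<in>UNIV. max 0 (a * \<phi> $ x - q) \<le> max 0 (c * \<phi> $ x - q)"
      proof
        fix x
        have "a * \<phi> $ x \<le> c * \<phi> $ x" using ac nn[of x] by (simp add: mult_right_mono)
        then show "max 0 (a * \<phi> $ x - q) \<le> max 0 (c * \<phi> $ x - q)" by simp
      qed
      have "a * \<phi> $ i < c * \<phi> $ i" using ac pi by simp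
      then show "\<exists>x\<in>UNIV. max 0 (a * \<phi> $ x - q) < max 0 (c * \<phi> $ x - q)"
        using i by (intro bexI[of _ i]) auto
    qed simp
    then show "Gf q \<phi> a < r" using assms by simp
  }
  {
    assume ac: "c < a"
    have "Gf q \<phi> c < Gf q \<phi> a" unfolding Gf_def
    proof (rule sum_strict_mono_ex1)
      show "\<forall>x\<in>UNIV. max 0 (c * \<phi> $ x - q) \<le> max 0 (a * \<phi> $ x - q)"
      proof
        fix x
        have "c * \<phi> $ x \<le> a * \<phi> $ x" using ac nn[of x] by (simp add: mult_right_mono)
        then show "max 0 (c * \<phi> $ x - q) \<le> max 0 (a * \<phi> $ x - q)" by simp
      qed
      have "c * \<phi> $ i < a * \<phi> $ i" using ac pi by simp
      then show "\<exists>x\<in>UNIV. max 0 (c * \<phi> $ x - q) < max 0 (a * \<phi> $ x - q)"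
        using i by (intro bexI[of _ i]) auto
    qed simp
    then show "Gf q \<phi> a > r" using assms by simp
  }
qed

lemma C_cont:
  assumes q0: "0 < q" and qp: "q < p"
    and hK: "p + (real CARD('n) - 1) * q = 1"
  shows "continuous_on (prob_simplex :: (real^'n) set) (\<lambda>\<phi>. cconst q \<phi> (tau_star q \<phi>))"
  unfolding continuous_on_def
proof
  let ?S = "prob_simplex :: (real^'n) set"
  let ?C = "\<lambda>\<phi>::real^'n. cconst q \<phi> (tau_star q \<phi>)"
  have GC: "Gf q \<phi> (?C \<phi>) = p - q" if "\<phi> \<in> ?S" for \<phi>
    using key(3)[OF that q0 qp hK] unfolding Gf_def .
  have pq: "p - q > 0" using qp by simp
  fix x assume x: "x \<in> ?S"
  have inS: "eventually (\<lambda>y. y \<in> ?S) (at x within ?S)"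
    by (simp add: eventually_at_filter)
  have Gt: "((\<lambda>y. Gf q y a) \<longlongrightarrow> Gf q x a) (at x within ?S)" for a
    unfolding Gf_def by (intro tendsto_intros)
  show "(?C \<longlongrightarrow> ?C x) (at x within ?S)"
  proof (rule order_tendstoI)
    fix a assume a: "a < ?C x"
    have "Gf q x a < p - q" using Gf_strict(1)[OF x GC[OF x] pq q0 a] .
    then have ev: "eventually (\<lambda>y. Gf q y a < p - q) (at x within ?S)"
      using order_tendstoD(2)[OF Gt] by blast
    show "eventually (\<lambda>y. a < ?C y) (at x within ?S)"
      using eventually_conj[OF ev inS]
    proof (rule eventually_mono)
      fix y assume y: "Gf q y a < p - q \<and> y \<in> ?S"
      show "a < ?C y"
      proof (rule ccontr)
        assume "\<not> a < ?C y"
        then have "Gf q y (?C y) \<le> Gf q y a" using y by (intro Gf_mono) auto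
        then show False using y GC[of y] by simp
      qed
    qed
  next
    fix a assume a: "?C x < a"
    have "Gf q x a > p - q" using Gf_strict(2)[OF x GC[OF x] pq q0 a] .
    then have ev: "eventually (\<lambda>y. Gf q y a > p - q) (at x within ?S)"
      using order_tendstoD(1)[OF Gt] by blast
    show "eventually (\<lambda>y. a > ?C y) (at x within ?S)"
      using eventually_conj[OF ev inS]
    proof (rule eventually_mono)
      fix y assume y: "Gf q y a > p - q \<and> y \<in> ?S"
      show "a > ?C y"
      proof (rule ccontr)
        assume "\<not> a > ?C y"
        then have "Gf q y a \<le> Gf q y (?C y)" using y by (intro Gf_mono) auto
        then show False using y GC[of y] by simp
      qed
    qed
  qed
qed

lemma MLE_cont:
  assumes q0: "0 < q" and qp: "q < p"
    and hK: "p + (real CARD('n) - 1) * q = 1"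
  shows "continuous_on prob_simplex (MLEstar p q :: real^'n \<Rightarrow> real^'n)"
proof -
  have "continuous_on prob_simplex
      (\<lambda>\<phi>::real^'n. \<chi> i. max 0 (cconst q \<phi> (tau_star q \<phi>) * \<phi> $ i - q) / (p - q))"
    using qp by (intro continuous_intros C_cont[OF q0 qp hK]) auto
  then show ?thesis
    by (rule continuous_on_cong[THEN iffD1, rotated -1]) (auto simp: key(2)[OF _ q0 qp hK])
qed

theorem lemma5:
  fixes p q :: real
  assumes "CARD('n::finite) \<ge> 2"
    and "0 < q" and "q < p"
    and "p + (real CARD('n) - 1) * q = 1"
  shows "continuous_on prob_simplex (Inv p q :: real^'n \<Rightarrow> real^'n)
       \<and> continuous_on prob_simplex (InvP p q :: real^'n \<Rightarrow> real^'n)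
       \<and> continuous_on prob_simplex (InvN p q :: real^'n \<Rightarrow> real^'n)
       \<and> continuous_on prob_simplex (MLEstar p q :: real^'n \<Rightarrow> real^'n)"
  using Inv_cont InvP_cont InvN_cont[OF assms(3,4)] MLE_cont[OF assms(2,3,4)] by blast

end
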